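(* Let $K$ be a totally real number field of degree $n$ and let $A\subseteq\mathbb{R}^n$ be an integer plane with integer distance $\mathrm{ID}(A)=k>0$. Then there exists $\delta\in\mathcal{O}_K^\vee$ such that $A$ is contained in the hyperplane $\{x\in\mathbb{R}^n:\sum_{i=1}^n\tau_i(\delta)x_i=k\}$.
   Context: $\tau_1,\dots,\tau_n$ are the real embeddings of $K$; the Minkowski embedding is $\iota_M:K\to\mathbb{R}^n$, $\alpha\mapsto(\tau_1(\alpha),\dots,\tau_n(\alpha))$, and $\Lambda=\iota_M(\mathcal{O}_K)$ is a lattice of rank $n$. The codifferent is $\mathcal{O}_K^\vee=\{\delta\in K:\operatorname{Tr}_{K/\mathbb{Q}}(\delta\alpha)\in\mathbb{Z}\ \forall\alpha\in\mathcal{O}_K\}$. An integer plane is an affine subspace $A\subseteq\mathbb{R}^n$ such that the set $A\cap\Lambda$ spans (affinely) a lattice of rank equal to $\dim A$. For an integer plane $A$ not containing the origin, its integer distance $\mathrm{ID}(A)$ is the index of the subgroup generated by $A\cap\Lambda$ in the lattice $\Lambda\cap\operatorname{Span}_{\mathbb{R}}(A)$ (and $\mathrm{ID}(A)=0$ if $A$ contains the origin). *)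

theory Defs
  imports "HOL-Analysis.Analysis" "HOL-Computational_Algebra.Polynomial"
begin

definition field_embedding :: "('k::field \<Rightarrow> 'b::field) \<Rightarrow> bool" where
  "field_embedding \<sigma> \<longleftrightarrow>
     (\<forall>x y. \<sigma> (x + y) = \<sigma> x + \<sigma> y) \<and> (\<forall>x y. \<sigma> (x * y) = \<sigma> x * \<sigma> y) \<and> \<sigma> 1 = 1"

text \<open>The field 'k (char 0) has degree CARD('n) over Q: it has a Q-basis indexed by 'n.\<close>
definition has_degree_basis :: "('n::finite \<Rightarrow> 'k::field_char_0) \<Rightarrow> bool" where
  "has_degree_basis b \<longleftrightarrow>
     (\<forall>x. \<exists>!c::'n \<Rightarrow> rat. x = (\<Sum>i\<in>UNIV. of_rat (c i) * b i))"

definition number_field_degree :: "'k::field_char_0 itself \<Rightarrow> 'n::finite itself \<Rightarrow> bool" where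
  "number_field_degree _ _ \<longleftrightarrow> (\<exists>b::'n \<Rightarrow> 'k. has_degree_basis b)"

definition totally_real :: "'k::field itself \<Rightarrow> bool" where
  "totally_real _ \<longleftrightarrow>
     (\<forall>\<sigma>::'k \<Rightarrow> complex. field_embedding \<sigma> \<longrightarrow> (\<forall>x. \<sigma> x \<in> \<real>))"

definition real_embeddings_enum :: "('n \<Rightarrow> 'k::field \<Rightarrow> real) \<Rightarrow> bool" where
  "real_embeddings_enum \<tau> \<longleftrightarrow>
     inj \<tau> \<and> (\<forall>i. field_embedding (\<tau> i)) \<and>
     (\<forall>\<sigma>::'k \<Rightarrow> real. field_embedding \<sigma> \<longrightarrow> (\<exists>i. \<sigma> = \<tau> i))"

definition ring_of_integers :: "'k::field set" where
  "ring_of_integers = {\<alpha>. algebraic_int \<alpha>}"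

definition minkowski :: "('n::finite \<Rightarrow> 'k \<Rightarrow> real) \<Rightarrow> 'k \<Rightarrow> real ^ 'n" where
  "minkowski \<tau> \<alpha> = (\<chi> i. \<tau> i \<alpha>)"

definition minkowski_lattice :: "('n::finite \<Rightarrow> 'k::field \<Rightarrow> real) \<Rightarrow> (real ^ 'n) set" where
  "minkowski_lattice \<tau> = minkowski \<tau> ` ring_of_integers"

definition trace :: "('n::finite \<Rightarrow> 'k \<Rightarrow> real) \<Rightarrow> 'k \<Rightarrow> real" where
  "trace \<tau> x = (\<Sum>i\<in>UNIV. \<tau> i x)"

definition codifferent :: "('n::finite \<Rightarrow> 'k::field \<Rightarrow> real) \<Rightarrow> 'k set" where
  "codifferent \<tau> = {\<delta>. \<forall>\<alpha>\<in>ring_of_integers. trace \<tau> (\<delta> * \<alpha>) \<in> \<int>}"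

definition zspan :: "('a::real_vector) set \<Rightarrow> 'a set" where
  "zspan S = {x. \<exists>T c. finite T \<and> T \<subseteq> S \<and> x = (\<Sum>v\<in>T. real_of_int (c v) *\<^sub>R v)}"

definition integer_plane :: "(real ^ 'n::finite) set \<Rightarrow> (real ^ 'n) set \<Rightarrow> bool" where
  "integer_plane \<Lambda> A \<longleftrightarrow> affine A \<and> aff_dim (A \<inter> \<Lambda>) = aff_dim A"

definition int_distance :: "(real ^ 'n::finite) set \<Rightarrow> (real ^ 'n) set \<Rightarrow> nat" where
  "int_distance \<Lambda> A =
     (if 0 \<in> A then 0
      else card ((\<lambda>x. (\<lambda>g. x + g) ` zspan (A \<inter> \<Lambda>)) ` (\<Lambda> \<inter> span A)))"

end

theory Submission imports Defs "Jordan_Normal_Form.Char_Poly" begin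

lemma eigen_alg_int:
  fixes x :: "'a::field_char_0" and v :: "'i \<Rightarrow> 'a" and c :: "'i \<Rightarrow> 'i \<Rightarrow> int"
  assumes fin: "finite I" and i0: "i0 \<in> I" "v i0 \<noteq> 0"
    and eq: "\<And>i. i \<in> I \<Longrightarrow> x * v i = (\<Sum>j\<in>I. of_int (c i j) * v j)"
  shows "algebraic_int x"
proof -
  define m where "m = card I"
  obtain h where h: "bij_betw h {0..<m} I" using ex_bij_betw_nat_finite[OF fin] m_def by blast
  define A :: "int mat" where "A = Matrix.mat m m (\<lambda>(r,s). c (h r) (h s))"
  define w :: "'a Matrix.vec" where "w = Matrix.vec m (\<lambda>r. v (h r))"
  have A: "A \<in> carrier_mat m m" by (simp add: A_def)
  let ?A = "of_int_hom.mat_hom A :: 'a mat"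
  have cA: "?A \<in> carrier_mat m m" using A by simp
  have mv: "?A *\<^sub>v w = x \<cdot>\<^sub>v w"
  proof (rule eq_vecI)
    fix r assume r: "r < dim_vec (x \<cdot>\<^sub>v w)"
    hence r': "r < m" by (simp add: w_def)
    have "(?A *\<^sub>v w) $ r = (\<Sum>s = 0..<m. of_int (c (h r) (h s)) * v (h s))"
      using r' by (simp add: mult_mat_vec_def scalar_prod_def A_def w_def)
    also have "\<dots> = (\<Sum>j\<in>I. of_int (c (h r) j) * v j)"
      using sum.reindex_bij_betw[OF h, of "\<lambda>j. of_int (c (h r) j) * v j"] by simp
    also have "\<dots> = x * v (h r)" using eq[of "h r"] h r' by (auto simp: bij_betw_def)
    finally show "(?A *\<^sub>v w) $ r = (x \<cdot>\<^sub>v w) $ r" using r' by (simp add: w_def)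
  qed (simp add: w_def A_def)
  have "w \<noteq> 0\<^sub>v m"
  proof
    assume w0: "w = 0\<^sub>v m"
    obtain r where r: "r < m" "h r = i0" using h i0 by (force simp: bij_betw_def)
    have "w $ r = 0" using w0 r by simp
    thus False using r i0 by (simp add: w_def)
  qed
  hence "eigenvector ?A w x" unfolding eigenvector_def using mv cA by (simp add: w_def)
  hence "eigenvalue ?A x" unfolding eigenvalue_def by blast
  hence "poly (char_poly ?A) x = 0" using eigenvalue_root_char_poly[OF cA] by simp
  hence "poly (of_int_poly (char_poly A)) x = 0" by (metis of_int_hom.char_poly_hom[OF A])
  moreover have "monic (char_poly A)" using degree_monic_char_poly[OF A] by simp
  ultimately show ?thesis unfolding algebraic_int_altdef_ipoly by blast
qed

lemma alg_int_power:
  fixes x :: "'a::field_char_0"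
  assumes "algebraic_int x"
  obtains d :: nat and a :: "nat \<Rightarrow> int" where "d > 0" "x ^ d = (\<Sum>i<d. of_int (a i) * x ^ i)"
proof -
  obtain p where p: "poly (of_int_poly p) x = 0" "monic p"
    using assms unfolding algebraic_int_altdef_ipoly by blast
  define d where "d = degree p"
  have "poly (of_int_poly p) x = (\<Sum>i\<le>degree (of_int_poly p :: 'a poly). coeff (of_int_poly p) i * x ^ i)"
    by (rule poly_altdef)
  also have "\<dots> = (\<Sum>i\<le>d. of_int (coeff p i) * x ^ i)"
    by (simp add: d_def)
  also have "\<dots> = (\<Sum>i<d. of_int (coeff p i) * x ^ i) + of_int (coeff p d) * x ^ d"
    by (simp only: lessThan_Suc_atMost[symmetric] sum.lessThan_Suc)
  also have "\<dots> = (\<Sum>i<d. of_int (coeff p i) * x ^ i) + x ^ d"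
    using p(2) by (simp add: d_def)
  finally have eq0: "0 = (\<Sum>i<d. of_int (coeff p i) * x ^ i) + x ^ d" using p(1) by simp
  have "d > 0"
  proof (rule ccontr)
    assume "\<not> d > 0"
    hence "d = 0" by simp
    thus False using eq0 by simp
  qed
  from eq0 have "x ^ d = - (\<Sum>i<d. of_int (coeff p i) * x ^ i)"
    by (simp add: add_eq_0_iff)
  also have "\<dots> = (\<Sum>i<d. of_int (- coeff p i) * x ^ i)"
    by (simp add: sum_negf[symmetric])
  finally have "x ^ d = (\<Sum>i<d. of_int (- coeff p i) * x ^ i)" .
  show ?thesis by (rule that[OF \<open>d > 0\<close>]) fact
qed

definition zsp :: "'i set \<Rightarrow> ('i \<Rightarrow> 'a::field) \<Rightarrow> 'a set" where
  "zsp I v = {u. \<exists>c::'i \<Rightarrow> int. u = (\<Sum>j\<in>I. of_int (c j) * v j)}"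

lemma zsp_0: "0 \<in> zsp I v"
  unfolding zsp_def by (rule CollectI, rule exI[of _ "\<lambda>_. 0"]) simp

lemma zsp_add: "u \<in> zsp I v \<Longrightarrow> u' \<in> zsp I v \<Longrightarrow> u + u' \<in> zsp I v"
proof -
  assume "u \<in> zsp I v" "u' \<in> zsp I v"
  then obtain c c' where "u = (\<Sum>j\<in>I. of_int (c j) * v j)" "u' = (\<Sum>j\<in>I. of_int (c' j) * v j)"
    unfolding zsp_def by blast
  hence "u + u' = (\<Sum>j\<in>I. of_int (c j + c' j) * v j)"
    by (simp add: sum.distrib distrib_right)
  thus ?thesis unfolding zsp_def by (intro CollectI exI[of _ "\<lambda>j. c j + c' j"])
qed

lemma zsp_base: "i \<in> I \<Longrightarrow> finite I \<Longrightarrow> v i \<in> zsp I v"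
proof -
  assume i: "i \<in> I" and f: "finite I"
  have "(\<Sum>j\<in>I. of_int (if j = i then 1 else 0) * v j) = (\<Sum>j\<in>I. if j = i then v j else 0)"
    by (rule sum.cong) auto
  also have "\<dots> = v i" using i f by simp
  finally have "v i = (\<Sum>j\<in>I. of_int (if j = i then 1 else 0) * v j)" by simp
  thus ?thesis unfolding zsp_def by (intro CollectI exI[of _ "\<lambda>j. if j = i then 1 else 0"])
qed

lemma zsp_int_mult: "u \<in> zsp I v \<Longrightarrow> of_int m * u \<in> zsp I v"
proof -
  assume "u \<in> zsp I v"
  then obtain c where "u = (\<Sum>j\<in>I. of_int (c j) * v j)" unfolding zsp_def by blast
  hence "of_int m * u = (\<Sum>j\<in>I. of_int (m * c j) * v j)"
    by (simp add: sum_distrib_left mult.assoc)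
  thus ?thesis unfolding zsp_def by (intro CollectI exI[of _ "\<lambda>j. m * c j"])
qed

lemma zsp_sum: "finite S \<Longrightarrow> (\<And>s. s \<in> S \<Longrightarrow> f s \<in> zsp I v) \<Longrightarrow> (\<Sum>s\<in>S. f s) \<in> zsp I v"
  by (induction S rule: finite_induct) (auto intro: zsp_0 zsp_add)

lemma zsp_mult_closed:
  assumes "finite I" "\<And>i. i \<in> I \<Longrightarrow> x * v i \<in> zsp I v" "u \<in> zsp I v"
  shows "x * u \<in> zsp I v"
proof -
  obtain c where "u = (\<Sum>j\<in>I. of_int (c j) * v j)" using assms(3) unfolding zsp_def by blast
  hence "x * u = (\<Sum>j\<in>I. of_int (c j) * (x * v j))"
    by (simp add: sum_distrib_left mult.left_commute)
  also have "\<dots> \<in> zsp I v"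
    using assms by (intro zsp_sum zsp_int_mult) auto
  finally show ?thesis .
qed

lemma zsp_alg_int:
  fixes x :: "'a::field_char_0"
  assumes "finite I" "i0 \<in> I" "v i0 \<noteq> 0" "\<And>i. i \<in> I \<Longrightarrow> x * v i \<in> zsp I v"
  shows "algebraic_int x"
proof -
  have "\<forall>i\<in>I. \<exists>c. x * v i = (\<Sum>j\<in>I. of_int (c j) * v j)"
    using assms(4) unfolding zsp_def by blast
  then obtain c where c: "\<And>i. i \<in> I \<Longrightarrow> x * v i = (\<Sum>j\<in>I. of_int (c i j) * v j)"
    by metis
  show ?thesis by (rule eigen_alg_int[OF assms(1-3) c])
qed

lemma alg_int_add_mult:
  fixes x y :: "'a::field_char_0"
  assumes "algebraic_int x" "algebraic_int y"
  shows "algebraic_int (x + y) \<and> algebraic_int (x * y)"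
proof -
  obtain d a where d: "d > 0" "x ^ d = (\<Sum>i<d. of_int (a i) * x ^ i)"
    using alg_int_power[OF assms(1)] by blast
  obtain e b where e: "e > 0" "y ^ e = (\<Sum>i<e. of_int (b i) * y ^ i)"
    using alg_int_power[OF assms(2)] by blast
  define I where "I = {..<d} \<times> {..<e}"
  define v where "v = (\<lambda>(i,j). x ^ i * y ^ j)"
  have fI: "finite I" by (simp add: I_def)
  have hx: "x * v k \<in> zsp I v" if k: "k \<in> I" for k
  proof -
    obtain i j where ij: "k = (i,j)" "i < d" "j < e" using k by (auto simp: I_def)
    show ?thesis
    proof (cases "Suc i < d")
      case True
      have "x * v k = v (Suc i, j)" by (simp add: ij v_def)
      thus ?thesis using True ij fI by (simp add: zsp_base I_def)
    next
      case False
      hence "Suc i = d" using ij by simp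
      have "x * v k = x ^ d * y ^ j" using \<open>Suc i = d\<close>[symmetric] by (simp add: ij v_def)
      also have "\<dots> = (\<Sum>i'<d. of_int (a i') * v (i', j))"
        by (simp add: d(2) v_def sum_distrib_right mult.assoc)
      also have "\<dots> \<in> zsp I v"
        using ij fI by (intro zsp_sum zsp_int_mult zsp_base) (auto simp: I_def)
      finally show ?thesis .
    qed
  qed
  have hy: "y * v k \<in> zsp I v" if k: "k \<in> I" for k
  proof -
    obtain i j where ij: "k = (i,j)" "i < d" "j < e" using k by (auto simp: I_def)
    show ?thesis
    proof (cases "Suc j < e")
      case True
      have "y * v k = v (i, Suc j)" by (simp add: ij v_def mult.left_commute)
      thus ?thesis using True ij fI by (simp add: zsp_base I_def)
    next
      case False
      hence "Suc j = e" using ij by simp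
      have "y * v k = x ^ i * y ^ e" using \<open>Suc j = e\<close>[symmetric] by (simp add: ij v_def mult.left_commute)
      also have "\<dots> = (\<Sum>j'<e. of_int (b j') * v (i, j'))"
        by (simp add: e(2) v_def sum_distrib_left mult.left_commute)
      also have "\<dots> \<in> zsp I v"
        using ij fI by (intro zsp_sum zsp_int_mult zsp_base) (auto simp: I_def)
      finally show ?thesis .
    qed
  qed
  have i0: "(0,0) \<in> I" using d e by (simp add: I_def)
  have v0: "v (0,0) \<noteq> 0" by (simp add: v_def)
  have "algebraic_int (x + y)"
  proof (rule zsp_alg_int[of I "(0,0)" v, OF fI i0 v0])
    fix k assume k: "k \<in> I"
    have "(x + y) * v k = x * v k + y * v k" by (simp add: distrib_right)
    thus "(x + y) * v k \<in> zsp I v" using zsp_add[OF hx[OF k] hy[OF k]] by simp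
  qed
  moreover have "algebraic_int (x * y)"
  proof (rule zsp_alg_int[of I "(0,0)" v, OF fI i0 v0])
    fix k assume k: "k \<in> I"
    have "x * (y * v k) \<in> zsp I v" by (rule zsp_mult_closed[OF fI hx hy[OF k]])
    thus "(x * y) * v k \<in> zsp I v" by (simp add: mult.assoc)
  qed
  ultimately show ?thesis by blast
qed

definition dotq :: "rat^'n \<Rightarrow> rat^'n \<Rightarrow> rat" where
  "dotq w x = (\<Sum>j\<in>UNIV. w$j * x$j)"

lemma dotq_add_right: "dotq w (x + y) = dotq w x + dotq w y"
  by (simp add: dotq_def distrib_left sum.distrib)
lemma dotq_diff_right: "dotq w (x - y) = dotq w x - dotq w y"
  by (simp add: dotq_def right_diff_distrib sum_subtractf)
lemma dotq_scale_right: "dotq w (c *s x) = c * dotq w x"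
  by (simp add: dotq_def sum_distrib_left mult.left_commute)
lemma dotq_zero_right [simp]: "dotq w 0 = 0"
  by (simp add: dotq_def)
lemma dotq_neg_right: "dotq w (- x) = - dotq w x"
  by (simp add: dotq_def sum_negf)
lemma dotq_add_scale_left: "dotq (w + s *s c) x = dotq w x + s * dotq c x"
  by (simp add: dotq_def distrib_right sum.distrib sum_distrib_left mult.assoc)
lemma dotq_sum_right: "dotq w (\<Sum>i\<in>S. f i) = (\<Sum>i\<in>S. dotq w (f i))"
  by (induction S rule: infinite_finite_induct) (simp_all add: dotq_add_right)

lemma dotq_span_zero:
  assumes "finite B" "\<And>b. b \<in> B \<Longrightarrow> dotq w b = 0" "x \<in> vec.span B"
  shows "dotq w x = 0"
proof -
  obtain u where "x = (\<Sum>v\<in>B. u v *s v)" using assms(3) vec.span_finite[OF assms(1)] by blast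
  thus ?thesis using assms(2) by (simp add: dotq_sum_right dotq_scale_right)
qed

lemma functional_exists:
  fixes B :: "(rat^'n) set"
  assumes "vec.independent B"
  shows "\<exists>w. \<forall>b\<in>B. dotq w b = g b"
proof -
  obtain k0 :: 'n where True by blast
  define f where "f = vec.construct B (\<lambda>b. g b *s axis k0 (1::rat))"
  have lf: "Vector_Spaces.linear (*s) (*s) f" unfolding f_def by (rule vec.linear_construct[OF assms])
  define w where "w = (\<chi> j. matrix f $ k0 $ j)"
  have "dotq w b = g b" if b: "b \<in> B" for b
  proof -
    have "dotq w b = (matrix f *v b) $ k0"
      by (simp add: dotq_def w_def matrix_vector_mult_def)
    also have "\<dots> = f b $ k0" by (simp add: matrix_works[OF lf])
    also have "\<dots> = g b"
    proof -
      have "f b = g b *s axis k0 1" unfolding f_def by (rule vec.construct_basis[OF assms b])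
      thus ?thesis by (simp add: axis_def)
    qed
    finally show ?thesis .
  qed
  thus ?thesis by blast
qed

lemma common_denom:
  fixes S :: "rat set"
  assumes "finite S"
  shows "\<exists>N::int. N > 0 \<and> (\<forall>q\<in>S. of_int N * q \<in> \<int>)"
  using assms
proof (induction S rule: finite_induct)
  case empty
  show ?case by (rule exI[of _ 1]) simp
next
  case (insert q S)
  then obtain N where N: "N > 0" "\<forall>q\<in>S. of_int N * q \<in> \<int>" by blast
  obtain a d where ad: "quotient_of q = (a, d)" by (cases "quotient_of q")
  have d: "d > 0" using quotient_of_denom_pos[OF ad] .
  have q: "q = of_int a / of_int d" using quotient_of_div[OF ad] .
  have "of_int d * q = of_int a" using d q by simp
  hence dq: "of_int d * q \<in> \<int>" by simp
  have "of_int (d * N) * q' \<in> \<int>" if "q' \<in> insert q S" for q'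
  proof (cases "q' = q")
    case True
    have "of_int (d * N) * q' = of_int N * (of_int d * q)" using True by (simp add: mult_ac)
    moreover have "of_int N * (of_int d * q) \<in> \<int>" by (rule Ints_mult[OF Ints_of_int dq])
    ultimately show ?thesis by metis
  next
    case False
    hence "q' \<in> S" using that by simp
    hence "of_int N * q' \<in> \<int>" using N by blast
    hence "of_int d * (of_int N * q') \<in> \<int>" by (rule Ints_mult[OF Ints_of_int])
    moreover have "of_int (d * N) * q' = of_int d * (of_int N * q')" by (simp add: mult_ac)
    ultimately show ?thesis by metis
  qed
  thus ?case using d N by (intro exI[of _ "d * N"]) simp
qed

lemma int_subgroup_mult:
  fixes H :: "'a::ring_1 set"
  assumes "0 \<in> H" "\<And>a b. a \<in> H \<Longrightarrow> b \<in> H \<Longrightarrow> a + b \<in> H" "\<And>a. a \<in> H \<Longrightarrow> - a \<in> H" "x \<in> H"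
  shows "of_int z * x \<in> H"
proof -
  have nat: "of_nat m * x \<in> H" for m :: nat
    by (induction m) (simp_all add: assms distrib_right)
  show ?thesis
  proof (cases "z \<ge> 0")
    case True
    hence "z = int (nat z)" by simp
    thus ?thesis using nat[of "nat z"] by (metis of_int_of_nat_eq)
  next
    case False
    hence "z = - int (nat (- z))" by simp
    hence "of_int z * x = - (of_nat (nat (- z)) * x)" by (metis minus_mult_left of_int_minus of_int_of_nat_eq)
    thus ?thesis using assms(3)[OF nat[of "nat (- z)"]] by simp
  qed
qed

lemma int_subgroup_cyclic:
  fixes H :: "int set"
  assumes "0 \<in> H" "\<And>a b. a \<in> H \<Longrightarrow> b \<in> H \<Longrightarrow> a + b \<in> H" "\<And>a. a \<in> H \<Longrightarrow> - a \<in> H"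
    "N \<in> H" "N \<noteq> 0"
  shows "\<exists>g>0. g \<in> H \<and> (\<forall>h\<in>H. g dvd h)"
proof -
  have mult: "z * x \<in> H" if "x \<in> H" for z x
    using int_subgroup_mult[OF assms(1-3) that, of z] by simp
  let ?P = "\<lambda>m::nat. m > 0 \<and> int m \<in> H"
  have PN: "?P (nat \<bar>N\<bar>)"
  proof (cases "N > 0")
    case True thus ?thesis using assms(4) by simp
  next
    case False thus ?thesis using assms(3)[OF assms(4)] assms(5) by simp
  qed
  define m where "m = (LEAST m. ?P m)"
  have Pm: "?P m" unfolding m_def by (rule LeastI[of ?P, OF PN])
  define g where "g = int m"
  have "g dvd h" if h: "h \<in> H" for h
  proof -
    have gH: "g \<in> H" using Pm by (simp add: g_def)
    have "h mod g = h + (- (h div g)) * g" by (simp add: minus_div_mult_eq_mod[symmetric])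
    moreover have "h + (- (h div g)) * g \<in> H" by (rule assms(2)[OF h mult[OF gH]])
    ultimately have hm: "h mod g \<in> H" by simp
    have "h mod g = 0"
    proof (rule ccontr)
      assume "h mod g \<noteq> 0"
      moreover have "h mod g \<ge> 0" "h mod g < g" using Pm by (simp_all add: g_def)
      ultimately have "?P (nat (h mod g))" using hm by simp
      hence "m \<le> nat (h mod g)" unfolding m_def by (rule Least_le)
      thus False using \<open>h mod g < g\<close> \<open>h mod g \<ge> 0\<close> by (simp add: g_def)
    qed
    thus ?thesis by (simp add: mod_eq_0_iff_dvd)
  qed
  thus ?thesis using Pm by (intro exI[of _ g]) (simp add: g_def)
qed


definition subgrp :: "'a::ab_group_add set \<Rightarrow> bool" where
  "subgrp G \<longleftrightarrow> 0 \<in> G \<and> (\<forall>a\<in>G. \<forall>b\<in>G. a + b \<in> G) \<and> (\<forall>a\<in>G. - a \<in> G)"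

lemma subgrp_int_mult:
  fixes G :: "(rat^'n) set"
  assumes "subgrp G" "x \<in> G"
  shows "rat_of_int z *s x \<in> G"
proof -
  have nat: "rat_of_nat m *s x \<in> G" for m :: nat
  proof (induction m)
    case 0 thus ?case using assms(1) by (simp add: subgrp_def)
  next
    case (Suc m)
    have "rat_of_nat (Suc m) *s x = rat_of_nat m *s x + x" by (simp add: vector_sadd_rdistrib)
    thus ?case using Suc assms unfolding subgrp_def by simp
  qed
  show ?thesis
  proof (cases "z \<ge> 0")
    case True
    hence "rat_of_int z = rat_of_nat (nat z)" by simp
    thus ?thesis using nat[of "nat z"] by metis
  next
    case False
    hence "z = - int (nat (- z))" by simp
    hence "rat_of_int z *s x = - (rat_of_nat (nat (- z)) *s x)"
      by (metis of_int_minus of_int_of_nat_eq vector_sneg_minus1 vector_smult_assoc mult_minus1)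
    thus ?thesis using nat[of "nat (- z)"] assms(1) unfolding subgrp_def by simp
  qed
qed

lemma subgrp_diff: "subgrp G \<Longrightarrow> a \<in> G \<Longrightarrow> b \<in> G \<Longrightarrow> a - b \<in> G"
  unfolding subgrp_def by (metis diff_conv_add_uminus)

lemma ext_step:
  fixes G :: "(rat^'n) set"
  assumes sg: "subgrp G"
    and bd: "D \<noteq> 0" "\<And>c j. c \<in> G \<Longrightarrow> of_int D * c$j \<in> \<int>"
    and T: "finite T" "T \<subseteq> G" and e: "e \<in> G" "e \<notin> vec.span T"
    and w: "\<And>l. l \<in> G \<Longrightarrow> l \<in> vec.span T \<Longrightarrow> dotq w l \<in> \<int>"
  shows "\<exists>w'. (\<forall>u\<in>T. dotq w' u = dotq w u) \<and> (\<forall>l\<in>G. l \<in> vec.span (insert e T) \<longrightarrow> dotq w' l \<in> \<int>)"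
proof -
  obtain B where B: "B \<subseteq> T" "vec.independent B" "T \<subseteq> vec.span B"
    using vec.maximal_independent_subset[of T] by blast
  have spB: "vec.span B = vec.span T"
    using B by (metis vec.span_mono vec.span_span subset_antisym)
  have fB: "finite B" using B T finite_subset by blast
  have eB: "e \<notin> vec.span B" using e spB by simp
  hence eB': "e \<notin> B" using vec.span_base by blast
  have indep: "vec.independent (insert e B)" using B(2) eB eB' by (simp add: vec.independent_insert)
  obtain chi where chi: "\<forall>b\<in>insert e B. dotq chi b = (if b = e then 1 else 0)"
    using functional_exists[OF indep, of "\<lambda>b. if b = e then 1 else 0"] by blast
  have chie: "dotq chi e = 1" using chi by simp
  have chiB: "\<And>b. b \<in> B \<Longrightarrow> dotq chi b = 0" using chi eB' by auto
  have chiT: "dotq chi u = 0" if "u \<in> vec.span T" for u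
    using dotq_span_zero[OF fB chiB, of u] that spB by auto
  obtain Q where Q: "Q > 0" "\<forall>q\<in>range (\<lambda>j. chi$j). of_int Q * q \<in> \<int>"
    using common_denom[of "range (\<lambda>j. chi$j)"] by auto
  define N where "N = D * Q"
  have N0: "N \<noteq> 0" using bd Q by (simp add: N_def)
  have Nint: "of_int N * dotq chi l \<in> \<int>" if "l \<in> G" for l
  proof -
    have "of_int N * dotq chi l = (\<Sum>j\<in>UNIV. (of_int Q * chi$j) * (of_int D * l$j))"
      by (simp add: N_def dotq_def sum_distrib_left mult_ac)
    also have "\<dots> \<in> \<int>"
    proof (rule Ints_sum)
      fix j :: 'n
      have "of_int Q * chi$j \<in> \<int>" using Q(2) by auto
      thus "(of_int Q * chi$j) * (of_int D * l$j) \<in> \<int>" using bd(2)[OF that] by (rule Ints_mult)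
    qed
    finally show ?thesis .
  qed
  define S where "S = vec.span (insert e T)"
  define H where "H = {m::int. \<exists>l\<in>G. l \<in> S \<and> of_int m = of_int N * dotq chi l}"
  have H0: "0 \<in> H" unfolding H_def using sg by (auto simp: subgrp_def S_def intro!: bexI[of _ 0] vec.span_zero)
  have Hadd: "a + b \<in> H" if ha: "a \<in> H" and hb: "b \<in> H" for a b
  proof -
    obtain la lb where "la \<in> G" "la \<in> S" "of_int a = of_int N * dotq chi la"
      "lb \<in> G" "lb \<in> S" "of_int b = of_int N * dotq chi lb" using ha hb unfolding H_def by blast
    thus ?thesis unfolding H_def using sg unfolding subgrp_def S_def
      by (intro CollectI bexI[of _ "la + lb"]) (auto simp: dotq_add_right distrib_left vec.span_add)
  qed
  have Hneg: "- a \<in> H" if ha: "a \<in> H" for a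
  proof -
    obtain la where "la \<in> G" "la \<in> S" "of_int a = of_int N * dotq chi la"
      using ha unfolding H_def by blast
    thus ?thesis unfolding H_def using sg unfolding subgrp_def S_def
      by (intro CollectI bexI[of _ "- la"]) (auto simp: dotq_neg_right vec.span_neg)
  qed
  have HN: "N \<in> H" unfolding H_def S_def using e chie
    by (intro CollectI bexI[of _ e]) (auto intro: vec.span_base)
  obtain g where g: "g > 0" "g \<in> H" "\<forall>h\<in>H. g dvd h"
    using int_subgroup_cyclic[OF H0 Hadd Hneg HN N0] by blast
  obtain l0 where l0: "l0 \<in> G" "l0 \<in> S" "of_int g = of_int N * dotq chi l0"
    using g(2) unfolding H_def by blast
  have c0: "dotq chi l0 \<noteq> 0" using l0(3) g(1) by auto
  define s where "s = - dotq w l0 / dotq chi l0"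
  define w' where "w' = w + s *s chi"
  have w'T: "dotq w' u = dotq w u" if "u \<in> T" for u
    using chiT[of u] that vec.span_base[of u T] by (simp add: w'_def dotq_add_scale_left)
  have w'l0: "dotq w' l0 = 0"
    unfolding w'_def dotq_add_scale_left s_def using c0 by simp
  have "dotq w' l \<in> \<int>" if l: "l \<in> G" "l \<in> S" for l
  proof -
    obtain m where m: "of_int N * dotq chi l = of_int m" using Nint[OF l(1)] by (auto elim: Ints_cases)
    have "m \<in> H" unfolding H_def using l m by auto
    then obtain z where z: "m = g * z" using g(3) by (auto elim: dvdE)
    have "of_int N * dotq chi l = of_int z * (of_int N * dotq chi l0)"
      using m z l0(3) by (simp add: mult_ac)
    hence "of_int N * dotq chi l = of_int N * (of_int z * dotq chi l0)" by (simp add: mult_ac)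
    hence dl: "dotq chi l = of_int z * dotq chi l0" using N0 by (metis mult_left_cancel of_int_eq_0_iff)
    define mu where "mu = l - rat_of_int z *s l0"
    have muG: "mu \<in> G" unfolding mu_def by (rule subgrp_diff[OF sg l(1) subgrp_int_mult[OF sg l0(1)]])
    have muS: "mu \<in> S" unfolding mu_def S_def using l(2) l0(2) unfolding S_def
      by (intro vec.span_diff vec.span_scale) auto
    have chimu: "dotq chi mu = 0" unfolding mu_def using dl by (simp add: dotq_diff_right dotq_scale_right)
    obtain k where k: "mu - k *s e \<in> vec.span T" using muS unfolding S_def vec.span_insert by blast
    have "dotq chi (mu - k *s e) = 0" by (rule chiT[OF k])
    hence "k = 0" using chimu chie by (simp add: dotq_diff_right dotq_scale_right)
    hence muT: "mu \<in> vec.span T" using k by simp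
    have "dotq w' l = dotq w' mu + of_int z * dotq w' l0"
      by (simp add: mu_def dotq_diff_right dotq_scale_right)
    also have "\<dots> = dotq w mu" using w'l0 chimu by (simp add: w'_def dotq_add_scale_left)
    also have "\<dots> \<in> \<int>" by (rule w[OF muG muT])
    finally show ?thesis .
  qed
  thus ?thesis using w'T unfolding S_def by blast
qed

lemma ext_all:
  fixes G :: "(rat^'n) set"
  assumes sg: "subgrp G"
    and bd: "D \<noteq> 0" "\<And>c j. c \<in> G \<Longrightarrow> of_int D * c$j \<in> \<int>"
    and ax: "\<And>j. axis j 1 \<in> G"
    and T: "finite T" "T \<subseteq> G"
    and w: "\<And>l. l \<in> G \<Longrightarrow> l \<in> vec.span T \<Longrightarrow> dotq w l \<in> \<int>"
  shows "\<exists>w'. (\<forall>u\<in>T. dotq w' u = dotq w u) \<and> (\<forall>l\<in>G. dotq w' l \<in> \<int>)"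
proof -
  have "\<exists>w'. (\<forall>u\<in>T. dotq w' u = dotq w u) \<and>
      (\<forall>l\<in>G. l \<in> vec.span (T \<union> (\<lambda>j. axis j 1) ` J) \<longrightarrow> dotq w' l \<in> \<int>)" if "finite J" for J
    using that
  proof (induction J rule: finite_induct)
    case empty
    show ?case using w by auto
  next
    case (insert j J)
    then obtain w1 where w1: "\<forall>u\<in>T. dotq w1 u = dotq w u"
      "\<forall>l\<in>G. l \<in> vec.span (T \<union> (\<lambda>j. axis j 1) ` J) \<longrightarrow> dotq w1 l \<in> \<int>" by blast
    define T1 where "T1 = T \<union> (\<lambda>j. axis j 1) ` J"
    have eqT: "T \<union> (\<lambda>j. axis j 1) ` insert j J = insert (axis j 1) T1" by (auto simp: T1_def)
    show ?case
    proof (cases "axis j 1 \<in> vec.span T1")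
      case True
      hence "vec.span (insert (axis j 1) T1) = vec.span T1" by (rule vec.span_redundant)
      thus ?thesis using w1 eqT T1_def by auto
    next
      case False
      have fT1: "finite T1" using T insert by (simp add: T1_def)
      have T1G: "T1 \<subseteq> G" using T ax by (auto simp: T1_def)
      obtain w2 where w2: "\<forall>u\<in>T1. dotq w2 u = dotq w1 u"
        "\<forall>l\<in>G. l \<in> vec.span (insert (axis j 1) T1) \<longrightarrow> dotq w2 l \<in> \<int>"
        using ext_step[OF sg bd fT1 T1G ax False, of w1] w1(2) T1_def by blast
      show ?thesis using w2 w1(1) eqT by (intro exI[of _ w2]) (auto simp: T1_def)
    qed
  qed
  from this[of UNIV] obtain w' where w': "\<forall>u\<in>T. dotq w' u = dotq w u"
    "\<forall>l\<in>G. l \<in> vec.span (T \<union> range (\<lambda>j. axis j 1)) \<longrightarrow> dotq w' l \<in> \<int>" by auto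
  have "vec.span (T \<union> range (\<lambda>j. axis j 1)) = UNIV"
  proof -
    have "cart_basis \<subseteq> T \<union> range (\<lambda>j. axis j 1)" by (auto simp: cart_basis_def)
    hence "vec.span cart_basis \<subseteq> vec.span (T \<union> range (\<lambda>j. axis j 1))" by (rule vec.span_mono)
    thus ?thesis by auto
  qed
  thus ?thesis using w' by auto
qed

lemma fe_hom: "field_embedding \<sigma> \<Longrightarrow> field_hom \<sigma>"
proof -
  assume h: "field_embedding \<sigma>"
  have add: "\<And>x y. \<sigma> (x + y) = \<sigma> x + \<sigma> y" and mul: "\<And>x y. \<sigma> (x * y) = \<sigma> x * \<sigma> y"
    and one: "\<sigma> 1 = 1" using h unfolding field_embedding_def by auto
  have "\<sigma> 0 = \<sigma> 0 + \<sigma> 0" using add[of 0 0] by simp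
  hence zero: "\<sigma> 0 = 0" by (metis add_cancel_right_right)
  show "field_hom \<sigma>" by unfold_locales (simp_all add: add mul one zero)
qed

lemma fe_of_rat:
  assumes "field_embedding (\<sigma> :: 'a::field_char_0 \<Rightarrow> 'b::field_char_0)"
  shows "\<sigma> (of_rat q) = of_rat q"
proof -
  interpret field_hom \<sigma> by (rule fe_hom[OF assms])
  obtain a d where ad: "quotient_of q = (a, d)" by (cases "quotient_of q")
  have q: "q = of_int a / of_int d" using quotient_of_div[OF ad] .
  have "\<sigma> (of_rat q) = \<sigma> (of_int a / of_int d)" by (simp add: q of_rat_divide)
  also have "\<dots> = of_int a / of_int d" by (simp add: hom_distribs)
  also have "\<dots> = of_rat q" by (simp add: q of_rat_divide)
  finally show ?thesis .
qed

lemma fe_alg_int: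
  assumes "field_embedding (\<sigma> :: 'a::field_char_0 \<Rightarrow> 'b::field_char_0)" "algebraic_int x"
  shows "algebraic_int (\<sigma> x)"
proof -
  interpret field_hom \<sigma> by (rule fe_hom[OF assms(1)])
  obtain p where p: "poly (of_int_poly p) x = 0" "monic p"
    using assms(2) unfolding algebraic_int_altdef_ipoly by blast
  have "poly (of_int_poly p) (\<sigma> x) = \<sigma> (poly (of_int_poly p) x)"
    by (simp add: poly_altdef hom_distribs of_int_hom.degree_map_poly_hom)
  thus ?thesis using p unfolding algebraic_int_altdef_ipoly by auto
qed

lemma alg_int_sum:
  fixes f :: "'i \<Rightarrow> 'a::field_char_0"
  assumes "\<And>i. i \<in> S \<Longrightarrow> algebraic_int (f i)"
  shows "algebraic_int (\<Sum>i\<in>S. f i)"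
  using assms
proof (induction S rule: infinite_finite_induct)
  case (insert i S)
  have "algebraic_int (f i)" "algebraic_int (\<Sum>i\<in>S. f i)" using insert by auto
  hence "algebraic_int (f i + (\<Sum>i\<in>S. f i))" using alg_int_add_mult by blast
  thus ?case using insert by simp
qed simp_all


no_notation Matrix.vec_index (infixl "$" 100)

lemma affine_sum_mem:
  fixes f :: "'i \<Rightarrow> 'a::real_vector"
  assumes A: "affine A" and I: "finite I" "\<And>i. i \<in> I \<Longrightarrow> f i \<in> A" and u: "sum u I = 1"
  shows "(\<Sum>i\<in>I. u i *\<^sub>R f i) \<in> A"
proof -
  define U where "U = (\<lambda>y. \<Sum>i\<in>{i \<in> I. f i = y}. u i)"
  have fin: "finite (f ` I)" using I by simp
  have "(\<Sum>i\<in>I. u i *\<^sub>R f i) = (\<Sum>y\<in>f ` I. \<Sum>i\<in>{i \<in> I. f i = y}. u i *\<^sub>R f i)"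
    by (rule sum.image_gen[OF I(1)])
  also have "\<dots> = (\<Sum>y\<in>f ` I. U y *\<^sub>R y)"
    unfolding U_def by (rule sum.cong[OF refl]) (simp add: scaleR_sum_left)
  finally have e1: "(\<Sum>i\<in>I. u i *\<^sub>R f i) = (\<Sum>y\<in>f ` I. U y *\<^sub>R y)" .
  have "sum U (f ` I) = sum u I" unfolding U_def by (rule sum.image_gen[OF I(1), symmetric])
  hence "sum U (f ` I) = 1" using u by simp
  hence "(\<Sum>y\<in>f ` I. U y *\<^sub>R y) \<in> affine hull (f ` I)"
    using affine_hull_finite[OF fin] by blast
  moreover have "affine hull (f ` I) \<subseteq> A" using A I(2) by (intro hull_minimal) auto
  ultimately show ?thesis using e1 by auto
qed

lemma affine_zero_sum:
  fixes f :: "'i \<Rightarrow> 'a::real_vector"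
  assumes A: "affine A" "0 \<notin> A" and I: "finite I" "\<And>i. i \<in> I \<Longrightarrow> f i \<in> A"
    and z: "(\<Sum>i\<in>I. u i *\<^sub>R f i) = 0"
  shows "sum u I = 0"
proof (rule ccontr)
  assume s: "sum u I \<noteq> 0"
  define v where "v = (\<lambda>i. u i / sum u I)"
  have "sum v I = 1" using s by (simp add: v_def sum_divide_distrib[symmetric])
  hence "(\<Sum>i\<in>I. v i *\<^sub>R f i) \<in> A" using affine_sum_mem[OF A(1) I(1), of f v] I(2) by blast
  moreover have "(\<Sum>i\<in>I. v i *\<^sub>R f i) = (1 / sum u I) *\<^sub>R (\<Sum>i\<in>I. u i *\<^sub>R f i)"
    by (simp add: v_def scaleR_sum_right divide_inverse mult.commute)
  ultimately show False using z A(2) by simp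
qed

lemma affine_coeff_sum:
  fixes f :: "'i \<Rightarrow> 'a::real_vector"
  assumes A: "affine A" "0 \<notin> A" and I: "finite I" "\<And>i. i \<in> I \<Longrightarrow> f i \<in> A"
    and x: "x \<in> A" "x = (\<Sum>i\<in>I. u i *\<^sub>R f i)"
  shows "sum u I = 1"
proof -
  define J where "J = insert None (Some ` I)"
  define f' where "f' = (\<lambda>j. case j of None \<Rightarrow> x | Some i \<Rightarrow> f i)"
  define u' where "u' = (\<lambda>j. case j of None \<Rightarrow> -1 | Some i \<Rightarrow> u i)"
  have fJ: "finite J" using I by (simp add: J_def)
  have fJA: "f' j \<in> A" if "j \<in> J" for j using that x I(2) by (auto simp: J_def f'_def)
  have inj: "inj_on Some I" by simp
  have "(\<Sum>j\<in>J. u' j *\<^sub>R f' j) = - x + (\<Sum>i\<in>I. u i *\<^sub>R f i)"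
    using I(1) by (simp add: J_def sum.reindex[OF inj] u'_def f'_def)
  also have "\<dots> = 0" using x(2) by simp
  finally have "sum u' J = 0" using affine_zero_sum[OF A fJ, of f' u'] fJA by blast
  moreover have "sum u' J = -1 + sum u I" using I(1) by (simp add: J_def sum.reindex[OF inj] u'_def)
  ultimately show ?thesis by simp
qed

lemma zspan_extend:
  fixes c :: "'a::real_vector \<Rightarrow> real"
  assumes "finite U" "T \<subseteq> U"
  shows "(\<Sum>v\<in>T. c v *\<^sub>R v) = (\<Sum>v\<in>U. (if v \<in> T then c v else 0) *\<^sub>R v)"
proof -
  have "(\<Sum>v\<in>U. (if v \<in> T then c v else 0) *\<^sub>R v) = (\<Sum>v\<in>U. if v \<in> T then c v *\<^sub>R v else 0)"
    by (rule sum.cong) auto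
  also have "\<dots> = (\<Sum>v\<in>U \<inter> T. c v *\<^sub>R v)" by (rule sum.inter_restrict[OF assms(1), symmetric])
  also have "U \<inter> T = T" using assms(2) by blast
  finally show ?thesis by simp
qed

lemma zspan_0: "0 \<in> zspan S"
  unfolding zspan_def by (rule CollectI, rule exI[of _ "{}"]) simp

lemma zspan_base: "x \<in> S \<Longrightarrow> x \<in> zspan S"
  unfolding zspan_def by (rule CollectI, rule exI[of _ "{x}"], rule exI[of _ "\<lambda>_. 1"]) simp

lemma zspan_add: "x \<in> zspan S \<Longrightarrow> y \<in> zspan S \<Longrightarrow> x + y \<in> zspan S"
proof -
  assume "x \<in> zspan S" "y \<in> zspan S"
  then obtain T c T' c' where t: "finite T" "T \<subseteq> S" "x = (\<Sum>v\<in>T. real_of_int (c v) *\<^sub>R v)"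
    and t': "finite T'" "T' \<subseteq> S" "y = (\<Sum>v\<in>T'. real_of_int (c' v) *\<^sub>R v)"
    unfolding zspan_def by blast
  define U where "U = T \<union> T'"
  have fU: "finite U" using t t' by (simp add: U_def)
  have "x = (\<Sum>v\<in>U. (if v \<in> T then real_of_int (c v) else 0) *\<^sub>R v)"
    using zspan_extend[OF fU, of T "\<lambda>v. real_of_int (c v)"] t by (simp add: U_def)
  moreover have "y = (\<Sum>v\<in>U. (if v \<in> T' then real_of_int (c' v) else 0) *\<^sub>R v)"
    using zspan_extend[OF fU, of T' "\<lambda>v. real_of_int (c' v)"] t' by (simp add: U_def)
  ultimately have "x + y = (\<Sum>v\<in>U. (if v \<in> T then real_of_int (c v) else 0) *\<^sub>R v + (if v \<in> T' then real_of_int (c' v) else 0) *\<^sub>R v)"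
    by (simp add: sum.distrib)
  also have "\<dots> = (\<Sum>v\<in>U. real_of_int ((if v \<in> T then c v else 0) + (if v \<in> T' then c' v else 0)) *\<^sub>R v)"
    by (rule sum.cong[OF refl]) (simp add: scaleR_add_left[symmetric] del: scaleR_add_left)
  finally have e: "x + y = (\<Sum>v\<in>U. real_of_int ((if v \<in> T then c v else 0) + (if v \<in> T' then c' v else 0)) *\<^sub>R v)" .
  have US: "U \<subseteq> S" using t t' by (simp add: U_def)
  show ?thesis unfolding zspan_def
    by (rule CollectI, rule exI[of _ U], rule exI[of _ "\<lambda>v. (if v \<in> T then c v else 0) + (if v \<in> T' then c' v else 0)"])
       (intro conjI fU US e)
qed

lemma zspan_neg: "x \<in> zspan S \<Longrightarrow> - x \<in> zspan S"
proof -
  assume "x \<in> zspan S"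
  then obtain T c where t: "finite T" "T \<subseteq> S" "x = (\<Sum>v\<in>T. real_of_int (c v) *\<^sub>R v)"
    unfolding zspan_def by blast
  hence e: "- x = (\<Sum>v\<in>T. real_of_int (- c v) *\<^sub>R v)" by (simp add: sum_negf)
  show ?thesis unfolding zspan_def
    by (rule CollectI, rule exI[of _ T], rule exI[of _ "\<lambda>v. - c v"]) (intro conjI t(1) t(2) e)
qed

lemma zspan_diff: "x \<in> zspan S \<Longrightarrow> y \<in> zspan S \<Longrightarrow> x - y \<in> zspan S"
  using zspan_add[of x S "- y"] zspan_neg[of y S] by simp

lemma zspan_sum: "finite I \<Longrightarrow> (\<And>i. i \<in> I \<Longrightarrow> f i \<in> zspan S) \<Longrightarrow> (\<Sum>i\<in>I. f i) \<in> zspan S"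
  by (induction I rule: finite_induct) (auto intro: zspan_0 zspan_add)


lemma index_mult:
  fixes Z L :: "'a::real_vector set"
  assumes Zsub: "Z \<subseteq> L" and Z0: "0 \<in> Z" and Zadd: "\<And>x y. x \<in> Z \<Longrightarrow> y \<in> Z \<Longrightarrow> x + y \<in> Z"
    and Zneg: "\<And>x. x \<in> Z \<Longrightarrow> - x \<in> Z"
    and Ladd: "\<And>x y. x \<in> L \<Longrightarrow> y \<in> L \<Longrightarrow> x + y \<in> L"
    and fin: "finite ((\<lambda>x. (\<lambda>g. x + g) ` Z) ` L)" and h: "h \<in> L"
  shows "real (card ((\<lambda>x. (\<lambda>g. x + g) ` Z) ` L)) *\<^sub>R h \<in> Z"
proof -
  define cs where "cs = (\<lambda>x. (\<lambda>g. x + g) ` Z)"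
  define Cs where "Cs = cs ` L"
  have Zsum: "(\<Sum>i\<in>I. f i) \<in> Z" if "finite I" "\<And>i. i \<in> I \<Longrightarrow> f i \<in> Z" for I and f :: "'a set \<Rightarrow> 'a"
    using that by (induction I rule: finite_induct) (auto intro: Z0 Zadd)
  define r where "r = (\<lambda>C::'a set. SOME y. y \<in> C)"
  have rC: "r C \<in> C" if CC: "C \<in> Cs" for C
  proof -
    obtain x where "C = cs x" using CC unfolding Cs_def by blast
    hence "x \<in> C" using Z0 by (auto simp: cs_def image_iff intro: bexI[of _ 0])
    thus ?thesis unfolding r_def by (rule someI)
  qed
  define sg where "sg = (\<lambda>C::'a set. (\<lambda>g. h + g) ` C)"
  have sg_cs: "sg (cs x) = cs (h + x)" for x
    by (simp add: sg_def cs_def image_image add.assoc)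
  have sgCs: "sg ` Cs \<subseteq> Cs" using sg_cs h Ladd by (auto simp: Cs_def)
  have inj: "inj_on sg Cs"
  proof (rule inj_onI)
    fix C C' assume "sg C = sg C'"
    hence "(\<lambda>g. - h + g) ` sg C = (\<lambda>g. - h + g) ` sg C'" by simp
    thus "C = C'" by (simp add: sg_def image_image)
  qed
  have sgCs_eq: "sg ` Cs = Cs" using endo_inj_surj[OF _ sgCs inj] fin by (simp add: Cs_def cs_def)
  have fCs: "finite Cs" using fin by (simp add: Cs_def cs_def)
  have "(\<Sum>C\<in>Cs. r (sg C)) = (\<Sum>C\<in>sg ` Cs. r C)" using sum.reindex[OF inj, of r] by (simp add: comp_def)
  hence sumeq: "(\<Sum>C\<in>Cs. r (sg C)) = (\<Sum>C\<in>Cs. r C)" using sgCs_eq by simp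
  have dZ: "r (sg C) - h - r C \<in> Z" if C: "C \<in> Cs" for C
  proof -
    obtain x where x: "x \<in> L" "C = cs x" using C by (auto simp: Cs_def)
    obtain z1 where z1: "z1 \<in> Z" "r C = x + z1" using rC[OF C] x(2) by (auto simp: cs_def)
    have "sg C \<in> Cs" using sgCs C by blast
    hence "r (sg C) \<in> sg C" by (rule rC)
    then obtain z2 where z2: "z2 \<in> Z" "r (sg C) = h + x + z2" using x(2) sg_cs by (auto simp: cs_def add.assoc)
    have "r (sg C) - h - r C = z2 + - z1" using z1 z2 by simp
    thus ?thesis using Zadd[OF z2(1) Zneg[OF z1(1)]] by simp
  qed
  have "(\<Sum>C\<in>Cs. r (sg C) - h - r C) \<in> Z" by (rule Zsum[OF fCs dZ])
  moreover have "(\<Sum>C\<in>Cs. r (sg C) - h - r C) = - (real (card Cs) *\<^sub>R h)"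
    using sumeq by (simp add: sum_subtractf sum_constant_scaleR)
  ultimately have "- (real (card Cs) *\<^sub>R h) \<in> Z" by simp
  hence "real (card Cs) *\<^sub>R h \<in> Z" using Zneg by fastforce
  thus ?thesis by (simp add: Cs_def cs_def)
qed


locale nf =
  fixes tau :: "'n::finite \<Rightarrow> 'k::field_char_0 \<Rightarrow> real" and b :: "'n \<Rightarrow> 'k"
  assumes emb: "\<And>i. field_embedding (tau i)" and injtau: "inj tau" and bas: "has_degree_basis b"
begin

lemma tau_add: "tau i (x + y) = tau i x + tau i y"
  using emb[of i] unfolding field_embedding_def by blast
lemma tau_mult: "tau i (x * y) = tau i x * tau i y"
  using emb[of i] unfolding field_embedding_def by blast
lemma tau_one: "tau i 1 = 1"
  using emb[of i] unfolding field_embedding_def by blast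
lemma tau_sum: "tau i (\<Sum>j\<in>S. f j) = (\<Sum>j\<in>S. tau i (f j))"
proof -
  interpret field_hom "tau i" by (rule fe_hom[OF emb])
  show ?thesis by (rule hom_sum)
qed
lemma tau_zero: "tau i 0 = 0"
proof -
  interpret field_hom "tau i" by (rule fe_hom[OF emb])
  show ?thesis by simp
qed
lemma tau_of_rat: "tau i (of_rat q) = of_rat q"
  by (rule fe_of_rat[OF emb])

definition coord :: "'k \<Rightarrow> 'n \<Rightarrow> rat" where
  "coord x = (THE c. x = (\<Sum>i\<in>UNIV. of_rat (c i) * b i))"

lemma coord: "x = (\<Sum>i\<in>UNIV. of_rat (coord x i) * b i)"
proof -
  have "\<exists>!c. x = (\<Sum>i\<in>UNIV. of_rat (c i) * b i)" using bas unfolding has_degree_basis_def by blast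
  thus ?thesis unfolding coord_def by (rule theI')
qed

lemma coord_unique: "x = (\<Sum>i\<in>UNIV. of_rat (c i) * b i) \<Longrightarrow> coord x = c"
proof -
  assume h: "x = (\<Sum>i\<in>UNIV. of_rat (c i) * b i)"
  have "\<exists>!c. x = (\<Sum>i\<in>UNIV. of_rat (c i) * b i)" using bas unfolding has_degree_basis_def by blast
  thus ?thesis using h coord[of x] by blast
qed

lemma coord_add: "coord (x + y) = (\<lambda>i. coord x i + coord y i)"
proof (rule coord_unique)
  show "x + y = (\<Sum>i\<in>UNIV. of_rat (coord x i + coord y i) * b i)"
    by (subst coord[of x], subst coord[of y]) (simp add: of_rat_add distrib_right sum.distrib)
qed

lemma coord_scale: "coord (of_rat q * x) = (\<lambda>i. q * coord x i)"
proof (rule coord_unique)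
  show "of_rat q * x = (\<Sum>i\<in>UNIV. of_rat (q * coord x i) * b i)"
    by (subst coord[of x]) (simp add: of_rat_mult sum_distrib_left mult.assoc)
qed

lemma coord_lin: "coord (\<Sum>i\<in>UNIV. of_rat (c i) * b i) = c"
  by (rule coord_unique) simp

lemma coord_sum: "coord (\<Sum>i\<in>S. f i) = (\<lambda>j. \<Sum>i\<in>S. coord (f i) j)"
proof (induction S rule: infinite_finite_induct)
  case (infinite S)
  have "coord 0 = (\<lambda>j. 0)" by (rule coord_unique) simp
  thus ?case using infinite by simp
next
  case empty
  have "coord 0 = (\<lambda>j. 0)" by (rule coord_unique) simp
  thus ?case by simp
next
  case (insert i S)
  thus ?case by (simp add: coord_add)
qed

lemma tau_coord: "tau i x = (\<Sum>j\<in>UNIV. of_rat (coord x j) * tau i (b j))"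
proof -
  have "tau i x = tau i (\<Sum>j\<in>UNIV. of_rat (coord x j) * b j)" by (subst coord[of x]) simp
  also have "\<dots> = (\<Sum>j\<in>UNIV. of_rat (coord x j) * tau i (b j))"
    by (simp add: tau_sum tau_mult tau_of_rat)
  finally show ?thesis .
qed

lemma dedekind:
  fixes c :: "'n \<Rightarrow> real"
  assumes "\<And>y. (\<Sum>i\<in>UNIV. c i * tau i y) = 0"
  shows "c i = 0"
proof -
  have main: "\<forall>c::'n\<Rightarrow>real. card {i. c i \<noteq> 0} = m \<longrightarrow> (\<forall>y. (\<Sum>i\<in>UNIV. c i * tau i y) = 0) \<longrightarrow> (\<forall>i. c i = 0)" for m
  proof (induction m rule: less_induct)
    case (less m)
    show ?case
    proof (rule allI, rule impI, rule impI)
      fix c :: "'n \<Rightarrow> real"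
      assume cm: "card {i. c i \<noteq> 0} = m" and h: "\<forall>y. (\<Sum>i\<in>UNIV. c i * tau i y) = 0"
      show "\<forall>i. c i = 0"
      proof (rule ccontr)
        assume "\<not> (\<forall>i. c i = 0)"
        then obtain i0 where i0: "c i0 \<noteq> 0" by blast
        show False
        proof (cases "\<exists>j0. j0 \<noteq> i0 \<and> c j0 \<noteq> 0")
          case False
          have "(\<Sum>i\<in>UNIV. c i * tau i 1) = (\<Sum>i\<in>UNIV. if i = i0 then c i0 else 0)"
            using False by (intro sum.cong) (auto simp: tau_one)
          also have "\<dots> = c i0" by simp
          finally show False using h i0 by simp
        next
          case True
          then obtain j0 where j0: "j0 \<noteq> i0" "c j0 \<noteq> 0" by blast
          have "tau j0 \<noteq> tau i0" using injtau j0(1) by (auto dest: injD)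
          then obtain z where z: "tau j0 z \<noteq> tau i0 z" by (meson ext)
          define c' where "c' = (\<lambda>i. c i * (tau i z - tau i0 z))"
          have h': "\<forall>y. (\<Sum>i\<in>UNIV. c' i * tau i y) = 0"
          proof
            fix y
            have "(\<Sum>i\<in>UNIV. c' i * tau i y) = (\<Sum>i\<in>UNIV. c i * tau i (z * y)) - tau i0 z * (\<Sum>i\<in>UNIV. c i * tau i y)"
              by (simp add: c'_def tau_mult algebra_simps sum_subtractf sum_distrib_left)
            thus "(\<Sum>i\<in>UNIV. c' i * tau i y) = 0" using h by simp
          qed
          have sub: "{i. c' i \<noteq> 0} \<subseteq> {i. c i \<noteq> 0} - {i0}" by (auto simp: c'_def)
          have "card {i. c' i \<noteq> 0} \<le> card ({i. c i \<noteq> 0} - {i0})" by (rule card_mono[OF _ sub]) simp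
          also have "\<dots> < card {i. c i \<noteq> 0}" using i0 by (intro card_Diff1_less) auto
          finally have lt: "card {i. c' i \<noteq> 0} < m" using cm by simp
          have "\<forall>i. c' i = 0" using less.IH[OF lt] h' by blast
          hence "c' j0 = 0" by blast
          thus False using j0 z by (simp add: c'_def)
        qed
      qed
    qed
  qed
  show ?thesis using main[of "card {i. c i \<noteq> 0}"] assms by blast
qed

definition Mm :: "real^'n^'n" where "Mm = (\<chi> i j. tau i (b j))"

lemma Mm_invertible: "invertible Mm"
proof -
  have inj: "inj ((*v) (transpose Mm))"
  proof (rule injI)
    fix x y assume xy: "transpose Mm *v x = transpose Mm *v y"
    define c where "c = x - y"
    have c0: "transpose Mm *v c = 0" using xy by (simp add: c_def matrix_vector_mult_diff_distrib)
    have cj: "(\<Sum>i\<in>UNIV. c$i * tau i (b j)) = 0" for j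
    proof -
      have "(transpose Mm *v c) $ j = 0" using c0 by simp
      thus ?thesis by (simp add: matrix_vector_mult_def transpose_def Mm_def mult.commute)
    qed
    have "(\<Sum>i\<in>UNIV. c$i * tau i yy) = 0" for yy
    proof -
      have "(\<Sum>i\<in>UNIV. c$i * tau i yy) = (\<Sum>i\<in>UNIV. c$i * (\<Sum>j\<in>UNIV. of_rat (coord yy j) * tau i (b j)))"
        using tau_coord[of _ yy] by simp
      also have "\<dots> = (\<Sum>i\<in>UNIV. \<Sum>j\<in>UNIV. of_rat (coord yy j) * (c$i * tau i (b j)))"
        by (simp add: sum_distrib_left mult_ac)
      also have "\<dots> = (\<Sum>j\<in>UNIV. \<Sum>i\<in>UNIV. of_rat (coord yy j) * (c$i * tau i (b j)))"
        by (rule sum.swap)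
      also have "\<dots> = (\<Sum>j\<in>UNIV. of_rat (coord yy j) * (\<Sum>i\<in>UNIV. c$i * tau i (b j)))"
        by (simp add: sum_distrib_left)
      also have "\<dots> = 0" using cj by simp
      finally show ?thesis .
    qed
    hence "c$i = 0" for i using dedekind[of "\<lambda>i. c$i"] by blast
    hence "c = 0" by (simp add: Finite_Cartesian_Product.vec_eq_iff)
    thus "x = y" by (simp add: c_def)
  qed
  then obtain B where B: "B ** transpose Mm = Finite_Cartesian_Product.mat 1" using matrix_left_invertible_injective by blast
  hence "transpose Mm ** B = Finite_Cartesian_Product.mat 1" using matrix_left_right_inverse by blast
  hence "invertible (transpose Mm)" using B unfolding invertible_def by blast
  hence "invertible (transpose (transpose Mm))" by (rule transpose_invertible)
  thus ?thesis by simp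
qed

definition trq :: "'k \<Rightarrow> rat" where "trq x = (\<Sum>j\<in>UNIV. coord (x * b j) j)"

lemma trace_trq: "(\<Sum>i\<in>UNIV. tau i x) = of_rat (trq x)"
proof -
  define C :: "real^'n^'n" where "C = (\<chi> l j. of_rat (coord (x * b j) l))"
  define Dg :: "real^'n^'n" where "Dg = (\<chi> i j. if i = j then tau i x else 0)"
  have MC: "Mm ** C = Dg ** Mm"
  proof -
    have "(Mm ** C) $ i $ j = (Dg ** Mm) $ i $ j" for i j
    proof -
      have "(Mm ** C) $ i $ j = (\<Sum>l\<in>UNIV. tau i (b l) * of_rat (coord (x * b j) l))"
        by (simp add: matrix_matrix_mult_def Mm_def C_def)
      also have "\<dots> = tau i (x * b j)" by (subst tau_coord[of i "x * b j"]) (simp add: mult.commute)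
      also have "\<dots> = tau i x * tau i (b j)" by (rule tau_mult)
      also have "\<dots> = (\<Sum>k\<in>UNIV. if k = i then tau i x * tau i (b j) else 0)" by simp
      also have "\<dots> = (\<Sum>k\<in>UNIV. (if i = k then tau i x else 0) * tau k (b j))"
        by (rule sum.cong) auto
      also have "\<dots> = (Dg ** Mm) $ i $ j"
        by (simp add: matrix_matrix_mult_def Mm_def Dg_def)
      finally show ?thesis .
    qed
    thus ?thesis by (simp add: Finite_Cartesian_Product.vec_eq_iff)
  qed
  obtain Mi where Mi: "Mm ** Mi = Finite_Cartesian_Product.mat 1" "Mi ** Mm = Finite_Cartesian_Product.mat 1"
    using Mm_invertible unfolding invertible_def by blast
  have "Dg = Dg ** (Mm ** Mi)" using Mi by (simp add: matrix_mul_rid)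
  also have "\<dots> = Mm ** (C ** Mi)" by (simp add: matrix_mul_assoc MC)
  finally have DgE: "Dg = Mm ** (C ** Mi)" .
  have "Determinants.trace Dg = Determinants.trace ((C ** Mi) ** Mm)"
    unfolding DgE by (rule trace_mul_sym)
  also have "\<dots> = Determinants.trace (C ** (Mi ** Mm))" by (simp add: matrix_mul_assoc)
  also have "\<dots> = Determinants.trace C" by (simp add: Mi matrix_mul_rid)
  finally have "Determinants.trace Dg = Determinants.trace C" .
  moreover have "Determinants.trace Dg = (\<Sum>i\<in>UNIV. tau i x)" by (simp add: Determinants.trace_def Dg_def)
  moreover have "Determinants.trace C = of_rat (trq x)" by (simp add: Determinants.trace_def C_def trq_def of_rat_sum)
  ultimately show ?thesis by simp
qed


lemma coord_zero: "coord 0 = (\<lambda>j. 0)"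
  by (rule coord_unique) simp

lemma trq_add: "trq (x + y) = trq x + trq y"
  by (simp add: trq_def distrib_right coord_add sum.distrib)

lemma trq_scale: "trq (of_rat q * x) = q * trq x"
  by (simp add: trq_def coord_scale sum_distrib_left mult.assoc)

lemma trq_zero: "trq 0 = 0"
  by (simp add: trq_def coord_zero)

lemma trq_sum: "trq (\<Sum>l\<in>S. f l) = (\<Sum>l\<in>S. trq (f l))"
  by (induction S rule: infinite_finite_induct) (simp_all add: trq_zero trq_add)

lemma trq_lin: "trq (y * (\<Sum>l\<in>UNIV. of_rat (c l) * b l)) = (\<Sum>l\<in>UNIV. c l * trq (y * b l))"
proof -
  have "y * (\<Sum>l\<in>UNIV. of_rat (c l) * b l) = (\<Sum>l\<in>UNIV. of_rat (c l) * (y * b l))"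
    by (simp add: sum_distrib_left mult_ac)
  thus ?thesis by (simp add: trq_sum trq_scale)
qed

lemma coord_basis: "coord (b j) = (\<lambda>i. if i = j then 1 else 0)"
proof (rule coord_unique)
  have "(\<Sum>i\<in>UNIV. of_rat (if i = j then 1 else 0) * b i) = (\<Sum>i\<in>UNIV. if i = j then b i else 0)"
    by (rule sum.cong) auto
  thus "b j = (\<Sum>i\<in>UNIV. of_rat (if i = j then 1 else 0) * b i)" by simp
qed

lemma trq_one: "trq 1 = of_nat CARD('n)"
  by (simp add: trq_def coord_basis)

lemma trq_int: "algebraic_int x \<Longrightarrow> trq x \<in> \<int>"
proof -
  assume x: "algebraic_int x"
  have "algebraic_int (\<Sum>i\<in>UNIV. tau i x)"
    by (rule alg_int_sum) (rule fe_alg_int[OF emb x])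
  hence "algebraic_int (of_rat (trq x) :: real)" by (simp add: trace_trq)
  hence "(of_rat (trq x) :: real) \<in> \<int>" by (rule rational_algebraic_int_is_int) simp
  then obtain m where "(of_rat (trq x) :: real) = of_int m" by (auto elim: Ints_cases)
  hence "trq x = of_int m" by (metis of_rat_eq_iff of_rat_of_int_eq)
  thus ?thesis by simp
qed

lemma nondeg: "(\<And>j. trq (y * b j) = 0) \<Longrightarrow> y = 0"
proof (rule ccontr)
  assume h: "\<And>j. trq (y * b j) = 0" and y: "y \<noteq> 0"
  have "trq (y * z) = 0" for z
  proof -
    have "trq (y * z) = trq (y * (\<Sum>l\<in>UNIV. of_rat (coord z l) * b l))" by (subst coord[of z]) simp
    also have "\<dots> = 0" by (simp add: trq_lin h)
    finally show ?thesis .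
  qed
  from this[of "inverse y"] have "trq 1 = 0" using y by simp
  thus False by (simp add: trq_one)
qed

definition Tm :: "rat^'n^'n" where "Tm = (\<chi> j l. trq (b j * b l))"

definition elt :: "rat^'n \<Rightarrow> 'k" where "elt c = (\<Sum>l\<in>UNIV. of_rat (c$l) * b l)"

lemma coord_elt: "coord (elt c) = (\<lambda>l. c$l)"
  unfolding elt_def by (rule coord_lin)

lemma Tm_mult: "(Tm *v c) $ j = trq (b j * elt c)"
proof -
  have "(Tm *v c) $ j = (\<Sum>l\<in>UNIV. trq (b j * b l) * c$l)"
    by (simp add: Tm_def matrix_vector_mult_def)
  also have "\<dots> = (\<Sum>l\<in>UNIV. c$l * trq (b j * b l))" by (rule sum.cong) simp_all
  also have "\<dots> = trq (b j * elt c)" unfolding elt_def by (rule trq_lin[symmetric])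
  finally show ?thesis .
qed

lemma Tm_invertible: "invertible Tm"
proof -
  have "inj ((*v) Tm)"
  proof (rule injI)
    fix x y assume xy: "Tm *v x = Tm *v y"
    have "Tm *v (x - y) = 0" using xy by (simp add: matrix_vector_mult_diff_distrib)
    hence "trq (b j * elt (x - y)) = 0" for j using Tm_mult[of "x - y" j] by simp
    hence "trq (elt (x - y) * b j) = 0" for j by (simp add: mult.commute)
    hence "elt (x - y) = 0" by (rule nondeg)
    hence "coord (elt (x - y)) = coord 0" by simp
    hence "(\<lambda>l. (x - y)$l) = (\<lambda>j. 0)" by (simp add: coord_elt coord_zero)
    hence "x - y = 0" by (simp add: Finite_Cartesian_Product.vec_eq_iff fun_eq_iff)
    thus "x = y" by simp
  qed
  then obtain B where B: "B ** Tm = Finite_Cartesian_Product.mat 1" using matrix_left_invertible_injective by blast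
  hence "Tm ** B = Finite_Cartesian_Product.mat 1" using matrix_left_right_inverse by blast
  thus ?thesis using B unfolding invertible_def by blast
qed

lemma trq_surj: "\<exists>d. \<forall>j. trq (d * b j) = w$j"
proof -
  obtain Ti where Ti: "Tm ** Ti = Finite_Cartesian_Product.mat 1" using Tm_invertible unfolding invertible_def by blast
  define c where "c = Ti *v w"
  have "Tm *v c = w" by (simp add: c_def matrix_vector_mul_assoc Ti)
  hence "trq (elt c * b j) = w$j" for j using Tm_mult[of c j] by (simp add: mult.commute)
  thus ?thesis by blast
qed


lemma exists_nonzero_b: "\<exists>i. b i \<noteq> 0"
proof (rule ccontr)
  assume "\<not> (\<exists>i. b i \<noteq> 0)"
  hence "\<And>i. b i = 0" by blast
  hence "(1::'k) = 0" using coord[of 1] by simp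
  thus False by simp
qed

lemma alg_int_multiple: "\<exists>N::int. N > 0 \<and> algebraic_int (of_int N * (x::'k))"
proof -
  obtain N where N: "N > 0" "\<forall>q\<in>(\<lambda>(j,l). coord (x * b j) l) ` UNIV. of_int N * q \<in> \<int>"
    using common_denom[of "(\<lambda>(j,l). coord (x * b j) l) ` UNIV"] by auto
  have "\<forall>j l. \<exists>m::int. of_int N * coord (x * b j) l = of_int m"
  proof (intro allI)
    fix j l
    have "of_int N * coord (x * b j) l \<in> \<int>" using N(2) by auto
    thus "\<exists>m::int. of_int N * coord (x * b j) l = of_int m" by (auto elim: Ints_cases)
  qed
  then obtain m where m: "\<And>j l. of_int N * coord (x * b j) l = of_int (m j l)" by metis
  obtain i0 where i0: "b i0 \<noteq> 0" using exists_nonzero_b by blast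
  have "algebraic_int (of_int N * x)"
  proof (rule eigen_alg_int[of UNIV i0 b _ m])
    fix j :: 'n
    have "of_int N * x * b j = of_rat (of_int N) * (x * b j)" by (simp add: mult.assoc)
    also have "\<dots> = of_rat (of_int N) * (\<Sum>l\<in>UNIV. of_rat (coord (x * b j) l) * b l)"
      using coord[of "x * b j"] by simp
    also have "\<dots> = (\<Sum>l\<in>UNIV. of_rat (of_int N * coord (x * b j) l) * b l)"
      by (simp add: sum_distrib_left of_rat_mult mult.assoc)
    also have "\<dots> = (\<Sum>l\<in>UNIV. of_int (m j l) * b l)" by (simp add: m)
    finally show "of_int N * x * b j = (\<Sum>l\<in>UNIV. of_int (m j l) * b l)" .
  qed (use i0 in auto)
  thus ?thesis using N(1) by blast
qed

lemma integral_basis: "\<exists>b'::'n \<Rightarrow> 'k. has_degree_basis b' \<and> (\<forall>j. algebraic_int (b' j))"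
proof -
  have "\<forall>j. \<exists>N::int. N > 0 \<and> algebraic_int (of_int N * b j)" using alg_int_multiple by blast
  then obtain N where N: "\<And>j. N j > 0" "\<And>j. algebraic_int (of_int (N j) * b j)" by metis
  define b' where "b' = (\<lambda>j. of_int (N j) * b j)"
  have "has_degree_basis b'"
    unfolding has_degree_basis_def
  proof
    fix x
    show "\<exists>!c. x = (\<Sum>i\<in>UNIV. of_rat (c i) * b' i)"
    proof
      have "(\<Sum>i\<in>UNIV. of_rat (coord x i / of_int (N i)) * b' i) = (\<Sum>i\<in>UNIV. of_rat (coord x i) * b i)"
      proof (rule sum.cong[OF refl])
        fix i :: 'n
        have Ni: "(of_int (N i) :: 'k) \<noteq> 0" using N(1)[of i] by simp
        have "of_rat (coord x i / of_int (N i)) * b' i = of_rat (coord x i) / of_int (N i) * (of_int (N i) * b i)"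
          by (simp add: b'_def of_rat_divide)
        also have "\<dots> = of_rat (coord x i) * b i" using Ni by (simp add: field_simps)
        finally show "of_rat (coord x i / of_int (N i)) * b' i = of_rat (coord x i) * b i" .
      qed
      thus "x = (\<Sum>i\<in>UNIV. of_rat (coord x i / of_int (N i)) * b' i)" using coord[of x] by simp
    next
      fix c assume c: "x = (\<Sum>i\<in>UNIV. of_rat (c i) * b' i)"
      have "x = (\<Sum>i\<in>UNIV. of_rat (c i * of_int (N i)) * b i)"
        using c by (simp add: b'_def of_rat_mult mult.assoc)
      hence "coord x = (\<lambda>i. c i * of_int (N i))" by (rule coord_unique)
      hence ci: "coord x i = c i * of_int (N i)" for i by metis
      show "c = (\<lambda>i. coord x i / of_int (N i))"
      proof
        fix i
        have "(of_int (N i) :: rat) \<noteq> 0" using N(1)[of i] by simp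
        thus "c i = coord x i / of_int (N i)" using ci[of i] by (simp add: field_simps)
      qed
    qed
  qed
  moreover have "\<forall>j. algebraic_int (b' j)" using N(2) by (simp add: b'_def)
  ultimately show ?thesis by blast
qed

end

locale nfi = nf tau b for tau :: "'n::finite \<Rightarrow> 'k::field_char_0 \<Rightarrow> real" and b :: "'n \<Rightarrow> 'k" +
  assumes bint: "\<And>j. algebraic_int (b j)"
begin

lemma bounded_coords: "\<exists>D::int. D > 0 \<and> (\<forall>a. algebraic_int a \<longrightarrow> (\<forall>l. of_int D * coord a l \<in> \<int>))"
proof -
  obtain Ti where Ti: "Ti ** Tm = Finite_Cartesian_Product.mat 1" using Tm_invertible unfolding invertible_def by blast
  obtain D where D: "D > 0" "\<forall>q\<in>(\<lambda>(l,j). Ti$l$j) ` UNIV. of_int D * q \<in> \<int>"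
    using common_denom[of "(\<lambda>(l,j). Ti$l$j) ` UNIV"] by auto
  have DT: "of_int D * Ti$l$j \<in> \<int>" for l j using D(2) by auto
  have "of_int D * coord a l \<in> \<int>" if a: "algebraic_int a" for a l
  proof -
    define cv where "cv = (\<chi> l. coord a l)"
    have ea: "elt cv = a" unfolding elt_def cv_def by (simp add: coord[of a, symmetric])
    have Tint: "(Tm *v cv) $ j \<in> \<int>" for j
      unfolding Tm_mult ea by (rule trq_int) (rule alg_int_add_mult[OF bint a, THEN conjunct2])
    have "cv = Ti *v (Tm *v cv)" by (simp add: matrix_vector_mul_assoc Ti)
    hence "coord a l = (Ti *v (Tm *v cv)) $ l" by (metis cv_def vec_lambda_beta)
    hence "of_int D * coord a l = (\<Sum>j\<in>UNIV. (of_int D * Ti$l$j) * (Tm *v cv)$j)"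
      by (simp add: matrix_vector_mult_def sum_distrib_left mult.assoc)
    also have "\<dots> \<in> \<int>" by (intro Ints_sum Ints_mult DT Tint)
    finally show ?thesis .
  qed
  thus ?thesis using D(1) by blast
qed


definition Rv :: "rat^'n \<Rightarrow> real^'n" where "Rv c = (\<chi> l. of_rat (c$l))"

lemma Rv_add: "Rv (c + d) = Rv c + Rv d"
  by (simp add: Rv_def Finite_Cartesian_Product.vec_eq_iff of_rat_add)
lemma Rv_scale: "Rv (q *s c) = of_rat q *\<^sub>R Rv c"
  by (simp add: Rv_def Finite_Cartesian_Product.vec_eq_iff of_rat_mult)
lemma Rv_sum: "Rv (\<Sum>i\<in>I. f i) = (\<Sum>i\<in>I. Rv (f i))"
  by (induction I rule: infinite_finite_induct)
     (simp_all add: Rv_add, simp_all add: Rv_def Finite_Cartesian_Product.vec_eq_iff)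
lemma Rv_inj: "Rv c = Rv d \<Longrightarrow> c = d"
  by (simp add: Rv_def Finite_Cartesian_Product.vec_eq_iff)

lemma Mm_inj: "Mm *v x = Mm *v y \<Longrightarrow> x = y"
proof -
  assume h: "Mm *v x = Mm *v y"
  obtain Mi where Mi: "Mi ** Mm = Finite_Cartesian_Product.mat 1"
    using Mm_invertible unfolding invertible_def by blast
  have "Mi *v (Mm *v x) = Mi *v (Mm *v y)" using h by simp
  thus "x = y" by (simp add: matrix_vector_mul_assoc Mi)
qed

lemma Phi_inj: "Mm *v Rv c = Mm *v Rv d \<Longrightarrow> c = d"
  using Mm_inj Rv_inj by blast

lemma elt_add: "elt (c + d) = elt c + elt d"
  by (simp add: elt_def of_rat_add distrib_right sum.distrib)
lemma elt_scale: "elt (q *s c) = of_rat q * elt c"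
  by (simp add: elt_def of_rat_mult sum_distrib_left mult.assoc)
lemma elt_zero: "elt 0 = 0"
  by (simp add: elt_def)
lemma elt_neg: "elt (- c) = - elt c"
  by (simp add: elt_def sum_negf of_rat_minus)
lemma elt_axis: "elt (axis j 1) = b j"
proof -
  have "elt (axis j 1) = (\<Sum>l\<in>UNIV. if l = j then b l else 0)"
    unfolding elt_def by (rule sum.cong) (auto simp: axis_def)
  thus ?thesis by simp
qed
lemma elt_coordv: "elt (\<chi> l. coord a l) = a"
  unfolding elt_def by (simp add: coord[of a, symmetric])

lemma mink_elt: "minkowski tau (elt c) = Mm *v Rv c"
proof -
  have "tau i (elt c) = (\<Sum>l\<in>UNIV. tau i (b l) * of_rat (c$l))" for i
    by (simp add: elt_def tau_sum tau_mult tau_of_rat mult.commute)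
  thus ?thesis by (simp add: minkowski_def Finite_Cartesian_Product.vec_eq_iff matrix_vector_mult_def Mm_def Rv_def)
qed

definition GG :: "(rat^'n) set" where "GG = {c::rat^'n. algebraic_int (elt c)}"

lemma GG_subgrp: "subgrp GG"
  unfolding subgrp_def GG_def
  by (auto simp: elt_add elt_zero elt_neg intro: alg_int_add_mult[THEN conjunct1])

lemma GG_axis: "axis j 1 \<in> GG"
  by (simp add: GG_def elt_axis bint)

lemma Lambda_eq: "minkowski_lattice tau = (\<lambda>c. Mm *v Rv c) ` GG"
proof
  show "minkowski_lattice tau \<subseteq> (\<lambda>c. Mm *v Rv c) ` GG"
  proof
    fix x assume "x \<in> minkowski_lattice tau"
    then obtain a where a: "algebraic_int a" "x = minkowski tau a"
      by (auto simp: minkowski_lattice_def ring_of_integers_def)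
    define c where "c = (\<chi> l. coord a l)"
    have "elt c = a" by (simp add: c_def elt_coordv)
    thus "x \<in> (\<lambda>c. Mm *v Rv c) ` GG" using a by (auto simp: GG_def mink_elt[symmetric] intro!: image_eqI[of _ _ c])
  qed
next
  show "(\<lambda>c. Mm *v Rv c) ` GG \<subseteq> minkowski_lattice tau"
    by (auto simp: GG_def mink_elt[symmetric] minkowski_lattice_def ring_of_integers_def)
qed

lemma GG_bounded: "\<exists>D::int. D \<noteq> 0 \<and> (\<forall>c j. c \<in> GG \<longrightarrow> of_int D * c$j \<in> \<int>)"
proof -
  obtain D where D: "D > 0" "\<forall>a. algebraic_int a \<longrightarrow> (\<forall>l. of_int D * coord a l \<in> \<int>)"
    using bounded_coords by blast
  have "of_int D * c$j \<in> \<int>" if "c \<in> GG" for c j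
  proof -
    have "of_int D * coord (elt c) j \<in> \<int>" using D(2) that by (auto simp: GG_def)
    thus ?thesis by (simp add: coord_elt)
  qed
  thus ?thesis using D(1) by (intro exI[of _ D]) auto
qed

lemma trq_dot: "(\<forall>j. trq (d * b j) = w$j) \<Longrightarrow> trq (d * elt c) = dotq w c"
proof -
  assume h: "\<forall>j. trq (d * b j) = w$j"
  have "trq (d * elt c) = (\<Sum>l\<in>UNIV. c$l * trq (d * b l))" unfolding elt_def by (rule trq_lin)
  also have "\<dots> = dotq w c" unfolding dotq_def using h by (simp add: mult.commute)
  finally show ?thesis .
qed


lemma main:
  fixes A :: "(real^'n) set" and k :: nat
  assumes ip: "integer_plane (minkowski_lattice tau) A"
    and idk: "int_distance (minkowski_lattice tau) A = k" and k0: "k > 0"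
  shows "\<exists>d\<in>codifferent tau. \<forall>x\<in>A. (\<Sum>i\<in>UNIV. tau i d * x $ i) = real k"
proof (cases "A = {}")
  case True
  have "0 \<in> codifferent tau"
    by (simp add: codifferent_def Defs.trace_def tau_zero)
  thus ?thesis using True by blast
next
  case Ane: False
  let ?L = "minkowski_lattice tau"
  define Phi where "Phi = (\<lambda>c. Mm *v Rv c)"
  have Leq: "?L = Phi ` GG" unfolding Phi_def by (rule Lambda_eq)
  have affA: "affine A" and adim: "aff_dim (A \<inter> ?L) = aff_dim A"
    using ip unfolding integer_plane_def by auto
  have A0: "0 \<notin> A"
  proof
    assume "0 \<in> A"
    hence "int_distance ?L A = 0" by (simp add: int_distance_def)
    thus False using idk k0 by simp
  qed
  define P where "P = A \<inter> ?L"
  have Pne: "P \<noteq> {}"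
  proof
    assume "P = {}"
    hence "aff_dim A = -1" using adim by (simp add: P_def)
    hence "aff_dim A < 0" by simp
    thus False using Ane by (simp only: aff_dim_negative_iff)
  qed
  have hullP: "affine hull P = A"
  proof (rule affine_dim_equal)
    show "affine (affine hull P)" by simp
    show "affine A" by (rule affA)
    show "affine hull P \<noteq> {}" using Pne by simp
    show "affine hull P \<subseteq> A" using affA by (intro hull_minimal) (auto simp: P_def)
    show "aff_dim (affine hull P) = aff_dim A" using adim by (simp add: P_def)
  qed
  have Phi_add: "Phi (c + d) = Phi c + Phi d" for c d
    by (simp add: Phi_def Rv_add matrix_vector_right_distrib)
  have Phi_scale: "Phi (q *s c) = of_rat q *\<^sub>R Phi c" for q c
    by (simp add: Phi_def Rv_scale matrix_vector_mult_scaleR)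
  have Phi_sum: "Phi (\<Sum>i\<in>I. f i) = (\<Sum>i\<in>I. Phi (f i))" for I and f :: "'i \<Rightarrow> rat^'n"
    by (simp add: Phi_def Rv_sum vec.sum)
  have Ladd: "x + y \<in> ?L" if hx: "x \<in> ?L" and hy: "y \<in> ?L" for x y
  proof -
    obtain c d where "c \<in> GG" "d \<in> GG" "x = Phi c" "y = Phi d" using hx hy unfolding Leq by blast
    thus ?thesis using GG_subgrp unfolding Leq subgrp_def by (auto simp: Phi_add[symmetric])
  qed
  have Lint: "real_of_int z *\<^sub>R x \<in> ?L" if hx: "x \<in> ?L" for x z
  proof -
    obtain c where c: "c \<in> GG" "x = Phi c" using hx unfolding Leq by blast
    have "real_of_int z *\<^sub>R x = Phi (rat_of_int z *s c)" using c by (simp add: Phi_scale)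
    thus ?thesis using subgrp_int_mult[OF GG_subgrp c(1)] Leq by auto
  qed
  have "Rv 0 = 0" by (simp add: Rv_def Finite_Cartesian_Product.vec_eq_iff)
  hence "Phi 0 = 0" by (simp add: Phi_def)
  hence L0: "0 \<in> ?L" using GG_subgrp unfolding Leq subgrp_def by (metis image_eqI)
  define Z where "Z = zspan P"
  define LL where "LL = ?L \<inter> span A"
  have ZLL: "Z \<subseteq> LL"
  proof
    fix x assume "x \<in> Z"
    then obtain T c where T: "finite T" "T \<subseteq> P" "x = (\<Sum>v\<in>T. real_of_int (c v) *\<^sub>R v)"
      unfolding Z_def zspan_def by blast
    have "(\<Sum>v\<in>T'. real_of_int (c v) *\<^sub>R v) \<in> ?L" if "finite T'" "T' \<subseteq> T" for T'
      using that
    proof (induction T' rule: finite_induct)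
      case empty thus ?case using L0 by simp
    next
      case (insert v T')
      have "v \<in> ?L" using insert T(2) by (auto simp: P_def)
      thus ?case using insert Ladd Lint by simp
    qed
    hence "x \<in> ?L" using T by blast
    moreover have "x \<in> span A" unfolding T(3) using T(2)
      by (intro span_sum span_scale) (auto simp: P_def intro: span_base)
    ultimately show "x \<in> LL" by (simp add: LL_def)
  qed
  have LLadd: "x + y \<in> LL" if "x \<in> LL" "y \<in> LL" for x y
    using that Ladd span_add by (auto simp: LL_def)
  have card_k: "card ((\<lambda>x. (\<lambda>g. x + g) ` Z) ` LL) = k"
    using idk A0 by (simp add: int_distance_def Z_def LL_def P_def)
  have finCs: "finite ((\<lambda>x. (\<lambda>g. x + g) ` Z) ` LL)"
    using card_k k0 by (intro card_ge_0_finite) simp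
  have kZ: "real k *\<^sub>R h \<in> Z" if "h \<in> LL" for h
    using index_mult[OF ZLL _ _ _ LLadd finCs that] card_k
    by (simp add: Z_def zspan_0 zspan_add zspan_neg)
  define GP where "GP = {c \<in> GG. Phi c \<in> A}"
  have Pcoord: "\<forall>v\<in>P. \<exists>c\<in>GP. Phi c = v"
    using Leq by (auto simp: P_def GP_def)
  then obtain cp where cp: "\<And>v. v \<in> P \<Longrightarrow> cp v \<in> GP \<and> Phi (cp v) = v" by metis
  obtain S where S: "S \<subseteq> GP" "vec.independent S" "GP \<subseteq> vec.span S"
    using vec.maximal_independent_subset[of GP] by blast
  have fS: "finite S" using S(2) by (rule vec.finiteI_independent)
  have SA: "Phi s \<in> A" if "s \<in> S" for s using that S(1) by (auto simp: GP_def)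
  have SG: "S \<subseteq> GG" using S(1) by (auto simp: GP_def)
  have coeff1: "sum a S = 1" if g: "g \<in> GP" "g = (\<Sum>s\<in>S. a s *s s)" for g a
  proof -
    have "Phi g = (\<Sum>s\<in>S. of_rat (a s) *\<^sub>R Phi s)" using g(2) by (simp add: Phi_sum Phi_scale)
    moreover have "Phi g \<in> A" using g(1) by (simp add: GP_def)
    ultimately have "(\<Sum>s\<in>S. (of_rat (a s) :: real)) = 1"
      using affine_coeff_sum[OF affA A0 fS, of Phi "Phi g" "\<lambda>s. of_rat (a s)"] SA by blast
    hence "(of_rat (sum a S) :: real) = 1" by (simp add: of_rat_sum)
    thus ?thesis by simp
  qed
  have Wk: "dotq w g = of_nat k" if w: "\<forall>s\<in>S. dotq w s = of_nat k" and g: "g \<in> GP" for w g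
  proof -
    obtain a where a: "g = (\<Sum>s\<in>S. a s *s s)" using S(3) g vec.span_finite[OF fS] by blast
    have "dotq w g = (\<Sum>s\<in>S. a s * dotq w s)" using a by (simp add: dotq_sum_right dotq_scale_right)
    also have "\<dots> = (\<Sum>s\<in>S. a s) * of_nat k" using w by (simp add: sum_distrib_right)
    also have "\<dots> = of_nat k" using coeff1[OF g a] by simp
    finally show ?thesis .
  qed
  obtain w0 where w0: "\<forall>s\<in>S. dotq w0 s = of_nat k"
    using functional_exists[OF S(2), of "\<lambda>_. of_nat k"] by blast
  have w0int: "dotq w0 l \<in> \<int>" if l: "l \<in> GG" "l \<in> vec.span S" for l
  proof -
    obtain a where a: "l = (\<Sum>s\<in>S. a s *s s)" using l(2) vec.span_finite[OF fS] by blast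
    have xlL: "Phi l \<in> ?L" using l(1) Leq by auto
    have "Phi l = (\<Sum>s\<in>S. of_rat (a s) *\<^sub>R Phi s)" using a by (simp add: Phi_sum Phi_scale)
    also have "\<dots> \<in> span A" using SA by (intro span_sum span_scale span_base)
    finally have "Phi l \<in> LL" using xlL by (simp add: LL_def)
    hence "real k *\<^sub>R Phi l \<in> zspan P" using kZ by (simp add: Z_def)
    then obtain T c where T: "finite T" "T \<subseteq> P" "real k *\<^sub>R Phi l = (\<Sum>v\<in>T. real_of_int (c v) *\<^sub>R v)"
      unfolding zspan_def by blast
    have "Phi (of_nat k *s l) = Phi (\<Sum>v\<in>T. of_int (c v) *s cp v)"
    proof -
      have "Phi (of_nat k *s l) = real k *\<^sub>R Phi l" by (simp add: Phi_scale)
      also have "\<dots> = (\<Sum>v\<in>T. real_of_int (c v) *\<^sub>R Phi (cp v))"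
        unfolding T(3) using T(2) cp by (intro sum.cong) auto
      also have "\<dots> = Phi (\<Sum>v\<in>T. of_int (c v) *s cp v)" by (simp add: Phi_sum Phi_scale)
      finally show ?thesis .
    qed
    hence eq: "of_nat k *s l = (\<Sum>v\<in>T. of_int (c v) *s cp v)" unfolding Phi_def by (rule Phi_inj)
    have "of_nat k * dotq w0 l = (\<Sum>v\<in>T. of_int (c v) * dotq w0 (cp v))"
      using arg_cong[OF eq, of "dotq w0"] by (simp add: dotq_sum_right dotq_scale_right)
    also have "\<dots> = (\<Sum>v\<in>T. of_int (c v) * of_nat k)"
      using T(2) cp Wk[OF w0] by (intro sum.cong) auto
    also have "\<dots> = (\<Sum>v\<in>T. of_int (c v)) * of_nat k" by (simp add: sum_distrib_right)
    finally have "of_nat k * dotq w0 l = (\<Sum>v\<in>T. of_int (c v)) * of_nat k" .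
    hence "dotq w0 l = (\<Sum>v\<in>T. of_int (c v))" using k0 by (simp add: mult.commute)
    thus ?thesis by (simp add: Ints_sum)
  qed
  obtain D where D: "D \<noteq> 0" "\<And>c j. c \<in> GG \<Longrightarrow> of_int D * c$j \<in> \<int>" using GG_bounded by blast
  obtain w' where w': "\<forall>u\<in>S. dotq w' u = dotq w0 u" "\<forall>l\<in>GG. dotq w' l \<in> \<int>"
    using ext_all[OF GG_subgrp D GG_axis fS SG w0int] by blast
  have w'k: "dotq w' g = of_nat k" if "g \<in> GP" for g
    using Wk[of w' g] w' w0 that by simp
  obtain d where d: "\<forall>j. trq (d * b j) = w'$j" using trq_surj by blast
  have dcod: "d \<in> codifferent tau"
    unfolding codifferent_def
  proof (intro CollectI ballI)
    fix a :: 'k assume "a \<in> ring_of_integers"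
    hence a: "algebraic_int a" by (simp add: ring_of_integers_def)
    define c where "c = (\<chi> l. coord a l)"
    have ea: "elt c = a" by (simp add: c_def elt_coordv)
    have cG: "c \<in> GG" using a ea by (simp add: GG_def)
    have "Defs.trace tau (d * a) = of_rat (trq (d * a))" by (simp add: Defs.trace_def trace_trq)
    also have "\<dots> = of_rat (dotq w' c)" using trq_dot[OF d, of c] ea by simp
    finally have "Defs.trace tau (d * a) = of_rat (dotq w' c)" .
    moreover obtain m where "dotq w' c = of_int m" using w'(2) cG by (auto elim: Ints_cases)
    ultimately show "Defs.trace tau (d * a) \<in> \<int>" by simp
  qed
  define nv where "nv = (\<chi> i. tau i d)"
  have onP: "nv \<bullet> p = real k" if p: "p \<in> P" for p
  proof -
    obtain c where c: "c \<in> GP" "Phi c = p" using cp[OF p] by blast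
    have pc: "p = minkowski tau (elt c)" using c(2) by (simp add: Phi_def mink_elt)
    have "nv \<bullet> p = (\<Sum>i\<in>UNIV. tau i d * tau i (elt c))"
      by (simp add: nv_def pc inner_vec_def minkowski_def)
    also have "\<dots> = (\<Sum>i\<in>UNIV. tau i (d * elt c))" by (simp add: tau_mult)
    also have "\<dots> = of_rat (trq (d * elt c))" by (rule trace_trq)
    also have "\<dots> = of_rat (dotq w' c)" using trq_dot[OF d, of c] by simp
    also have "\<dots> = real k" using w'k[OF c(1)] by simp
    finally show ?thesis .
  qed
  have "A \<subseteq> {x. nv \<bullet> x = real k}"
  proof -
    have "affine hull P \<subseteq> {x. nv \<bullet> x = real k}"
      using onP by (intro hull_minimal) (auto simp: affine_hyperplane)
    thus ?thesis using hullP by simp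
  qed
  hence "\<forall>x\<in>A. (\<Sum>i\<in>UNIV. tau i d * x $ i) = real k"
    by (auto simp: nv_def inner_vec_def)
  thus ?thesis using dcod by blast
qed

end

theorem lemma2p1:
  fixes \<tau> :: "'n::finite \<Rightarrow> 'k::field_char_0 \<Rightarrow> real"
    and A :: "(real ^ 'n) set" and k :: nat
  assumes "number_field_degree TYPE('k) TYPE('n)"
    and "totally_real TYPE('k)"
    and "real_embeddings_enum \<tau>"
    and "integer_plane (minkowski_lattice \<tau>) A"
    and "int_distance (minkowski_lattice \<tau>) A = k"
    and "k > 0"
  shows "\<exists>\<delta>\<in>codifferent \<tau>. \<forall>x\<in>A. (\<Sum>i\<in>UNIV. \<tau> i \<delta> * x $ i) = real k"
proof -
  obtain b :: "'n \<Rightarrow> 'k" where b: "has_degree_basis b"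
    using assms(1) unfolding number_field_degree_def by blast
  have emb: "\<And>i. field_embedding (\<tau> i)" and inj: "inj \<tau>"
    using assms(3) unfolding real_embeddings_enum_def by auto
  interpret nf \<tau> b using emb inj b by unfold_locales
  obtain b' :: "'n \<Rightarrow> 'k" where b': "has_degree_basis b'" "\<forall>j. algebraic_int (b' j)"
    using integral_basis by blast
  interpret I: nfi \<tau> b' using emb inj b' by unfold_locales auto
  show ?thesis using I.main[OF assms(4) assms(5) assms(6)] .
qed

end
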